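(* Let $\mathfrak E=(\mathfrak e_1,\dots,\mathfrak e_n)$ be an admissible sequence of virtual extended $\mathbb Z$-segments such that $\mathrm{Supp}(\mathfrak e_1)\supseteq\mathrm{Supp}(\mathfrak e_2)\supseteq\cdots\supseteq\mathrm{Supp}(\mathfrak e_n)$. Then $\mathrm{NV}(\mathfrak E)\ne0$ if and only if $\widetilde{\mathrm{NV}}(\mathfrak E)\ne0$.
   Context: A $\mathbb Z$-segment is $[A,B]=\{A,\dots,B\}$ ($A\ge B$ integers), length $b=A-B+1$. A virtual extended $\mathbb Z$-segment is $([A,B],l,\eta)$, $l\in\mathbb Z$, $l\le b/2$, $\eta\in\{\pm1\}$ with $\eta\sim-\eta$ iff $b=2l$; extended if $l\ge0$; $\mathrm{Supp}=[A,B]$. A sequence with supports $[A_i,B_i]$ is admissible if $A_i<A_j$ and $B_i<B_j$ imply $i<j$. Pairwise non-vanishing: for admissible $(\mathfrak e_1,\mathfrak e_2)$, $\mathfrak e_i=([A_i,B_i],l_i,\eta_i)$, $b_i=A_i-B_i+1$, $\epsilon=(-1)^{A_1-B_1}\eta_1\eta_2$, $\mathrm{NV}(\mathfrak e_1,\mathfrak e_2)\ne0$ iff both are extended and all applicable conditions hold: (a) if $A_1\le A_2$, $B_1\le B_2$: $\epsilon=1\Rightarrow B_1+l_1\le B_2+l_2,\ A_1-l_1\le A_2-l_2$; $\epsilon=-1\Rightarrow A_1-l_1<B_2+l_2$; (b) if $A_1\le A_2$, $B_1\ge B_2$: $\epsilon=1\Rightarrow0\le l_2-l_1\le b_2-b_1$;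 $\epsilon=-1\Rightarrow l_1+l_2\ge b_1$; (c) if $A_1\ge A_2$, $B_1\le B_2$: $\epsilon=1\Rightarrow0\le l_1-l_2\le b_1-b_2$; $\epsilon=-1\Rightarrow l_1+l_2\ge b_2$. Row exchange $R(\mathfrak e_1,\mathfrak e_2)=(\mathfrak e_2',\mathfrak e_1')$ for nested supports, $\mathfrak e_i'=([A_i,B_i],l_i',\eta_i')$: Case 1, $[A_1,B_1]\subseteq[A_2,B_2]$: $(l_1',\eta_1')=(l_1,(-1)^{A_2-B_2}\eta_1)$; if $\epsilon=1$ and $b_2-2l_2<2(b_1-2l_1)$, $(l_2',\eta_2')=(b_2-l_2-(b_1-2l_1),(-1)^{A_1-B_1}\eta_2)$; if $\epsilon=1$ and $b_2-2l_2\ge2(b_1-2l_1)$, $(l_2',\eta_2')=(l_2+b_1-2l_1,(-1)^{A_1-B_1+1}\eta_2)$; if $\epsilon=-1$, $(l_2',\eta_2')=(l_2-(b_1-2l_1),(-1)^{A_1-B_1+1}\eta_2)$. Case 2, $[A_1,B_1]\supsetneq[A_2,B_2]$: $(l_2',\eta_2')=(l_2,(-1)^{A_1-B_1}\eta_2)$; if $\epsilon=1$ and $b_1-2l_1<2(b_2-2l_2)$, $(l_1',\eta_1')=(b_1-l_1-(b_2-2l_2),(-1)^{A_2-B_2}\eta_1)$; if $\epsilon=1$ and $b_1-2l_1\ge2(b_2-2l_2)$, $(l_1',\eta_1')=(l_1+b_2-2l_2,(-1)^{A_2-B_2+1}\eta_1)$; if $\epsilon=-1$, $(l_1',\eta_1')=(l_1-(b_2-2l_2),(-1)^{A_2-B_2+1}\eta_1)$.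 $R_k(\mathfrak E)$ replaces consecutive entries $(\mathfrak e_k,\mathfrak e_{k+1})$ with nested supports by $R(\mathfrak e_k,\mathfrak e_{k+1})$; $[\mathfrak E]$ is the set of sequences obtained from $\mathfrak E$ by finitely many $R_k$. $\widetilde{\mathrm{NV}}(\mathfrak E)\ne0$ means $\mathrm{NV}(\mathfrak e_i,\mathfrak e_{i+1})\ne0$ for all $1\le i\le n-1$; $\mathrm{NV}(\mathfrak E)\ne0$ means $\widetilde{\mathrm{NV}}(\mathfrak E')\ne0$ for all $\mathfrak E'\in[\mathfrak E]$. *)

theory Defs
  imports Main
begin

datatype vseg = VSeg (segA: int) (segB: int) (segl: int) (segeta: int)

definition seglen :: "vseg \<Rightarrow> int" where
  "seglen e = segA e - segB e + 1"

definition valid_vseg :: "vseg \<Rightarrow> bool" where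
  "valid_vseg e \<longleftrightarrow> segB e \<le> segA e \<and> 2 * segl e \<le> seglen e \<and> segeta e \<in> {1, -1}"

definition extended :: "vseg \<Rightarrow> bool" where
  "extended e \<longleftrightarrow> 0 \<le> segl e"

definition Supp :: "vseg \<Rightarrow> int set" where
  "Supp e = {segB e .. segA e}"

definition sgnpow :: "int \<Rightarrow> int" where
  "sgnpow k = (if even k then 1 else -1)"

definition admissible :: "vseg list \<Rightarrow> bool" where
  "admissible E \<longleftrightarrow> (\<forall>i<length E. \<forall>j<length E.
      segA (E!i) < segA (E!j) \<and> segB (E!i) < segB (E!j) \<longrightarrow> i < j)"

definition epsilon :: "vseg \<Rightarrow> vseg \<Rightarrow> int" where
  "epsilon e1 e2 = sgnpow (segA e1 - segB e1) * segeta e1 * segeta e2"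

text \<open>Pairwise non-vanishing NV(e1,e2) \<noteq> 0.\<close>
definition NV_pair :: "vseg \<Rightarrow> vseg \<Rightarrow> bool" where
  "NV_pair e1 e2 \<longleftrightarrow>
    (let A1 = segA e1; B1 = segB e1; l1 = segl e1; b1 = seglen e1;
         A2 = segA e2; B2 = segB e2; l2 = segl e2; b2 = seglen e2;
         \<epsilon> = epsilon e1 e2 in
     extended e1 \<and> extended e2 \<and>
     (A1 \<le> A2 \<and> B1 \<le> B2 \<longrightarrow>
        (\<epsilon> = 1 \<longrightarrow> B1 + l1 \<le> B2 + l2 \<and> A1 - l1 \<le> A2 - l2) \<and>
        (\<epsilon> = -1 \<longrightarrow> A1 - l1 < B2 + l2)) \<and>
     (A1 \<le> A2 \<and> B1 \<ge> B2 \<longrightarrow>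
        (\<epsilon> = 1 \<longrightarrow> 0 \<le> l2 - l1 \<and> l2 - l1 \<le> b2 - b1) \<and>
        (\<epsilon> = -1 \<longrightarrow> l1 + l2 \<ge> b1)) \<and>
     (A1 \<ge> A2 \<and> B1 \<le> B2 \<longrightarrow>
        (\<epsilon> = 1 \<longrightarrow> 0 \<le> l1 - l2 \<and> l1 - l2 \<le> b1 - b2) \<and>
        (\<epsilon> = -1 \<longrightarrow> l1 + l2 \<ge> b2)))"

definition nested :: "vseg \<Rightarrow> vseg \<Rightarrow> bool" where
  "nested e1 e2 \<longleftrightarrow> Supp e1 \<subseteq> Supp e2 \<or> Supp e2 \<subseteq> Supp e1"

definition row_exchange :: "vseg \<Rightarrow> vseg \<Rightarrow> vseg \<times> vseg" where
  "row_exchange e1 e2 =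
    (let A1 = segA e1; B1 = segB e1; l1 = segl e1; b1 = seglen e1; n1 = segeta e1;
         A2 = segA e2; B2 = segB e2; l2 = segl e2; b2 = seglen e2; n2 = segeta e2;
         \<epsilon> = epsilon e1 e2 in
     if Supp e1 \<subseteq> Supp e2 then
       (let (l1', n1') = (l1, sgnpow (A2 - B2) * n1);
            (l2', n2') =
              (if \<epsilon> = 1 then
                 (if b2 - 2*l2 < 2*(b1 - 2*l1)
                  then (b2 - l2 - (b1 - 2*l1), sgnpow (A1 - B1) * n2)
                  else (l2 + b1 - 2*l1, sgnpow (A1 - B1 + 1) * n2))
               else (l2 - (b1 - 2*l1), sgnpow (A1 - B1 + 1) * n2))
        in (VSeg A2 B2 l2' n2', VSeg A1 B1 l1' n1'))
     else
       (let (l2', n2') = (l2, sgnpow (A1 - B1) * n2);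
            (l1', n1') =
              (if \<epsilon> = 1 then
                 (if b1 - 2*l1 < 2*(b2 - 2*l2)
                  then (b1 - l1 - (b2 - 2*l2), sgnpow (A2 - B2) * n1)
                  else (l1 + b2 - 2*l2, sgnpow (A2 - B2 + 1) * n1))
               else (l1 - (b2 - 2*l2), sgnpow (A2 - B2 + 1) * n1))
        in (VSeg A2 B2 l2' n2', VSeg A1 B1 l1' n1')))"

definition R_step :: "vseg list \<Rightarrow> vseg list \<Rightarrow> bool" where
  "R_step E E' \<longleftrightarrow> (\<exists>k. Suc k < length E \<and> nested (E!k) (E!Suc k) \<and>
      E' = E[k := fst (row_exchange (E!k) (E!Suc k)),
             Suc k := snd (row_exchange (E!k) (E!Suc k))])"

definition eqclass :: "vseg list \<Rightarrow> vseg list set" where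
  "eqclass E = {E'. R_step\<^sup>*\<^sup>* E E'}"

definition NVt :: "vseg list \<Rightarrow> bool" where
  "NVt E \<longleftrightarrow> (\<forall>i. Suc i < length E \<longrightarrow> NV_pair (E!i) (E!Suc i))"

definition NV :: "vseg list \<Rightarrow> bool" where
  "NV E \<longleftrightarrow> (\<forall>E'\<in>eqclass E. NVt E')"

end

theory Submission imports Defs "HOL-Library.Product_Lexorder" "HOL-Library.Multiset" begin

lemma sgnpow_cases: "sgnpow k = 1 \<or> sgnpow k = -1"
  by (simp add: sgnpow_def)
lemma sgnpow_Suc: "sgnpow (k+1) = - sgnpow k"
  by (simp add: sgnpow_def)

type_synonym key = "int \<times> int"

definition key :: "vseg \<Rightarrow> key" where "key e = (- segA e, segB e)"
definition kin :: "key \<Rightarrow> key \<Rightarrow> bool" where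
  "kin k k' \<longleftrightarrow> fst k' \<le> fst k \<and> snd k' \<le> snd k"
definition klen :: "key \<Rightarrow> int" where "klen k = - fst k - snd k + 1"

definition rc :: "(key \<Rightarrow> int) \<Rightarrow> key list \<Rightarrow> int \<Rightarrow> int" where
  "rc C L z = fold (\<lambda>k z. 2 * C k - z) L z"

lemma rc_Nil[simp]: "rc C [] z = z" by (simp add: rc_def)
lemma rc_Cons[simp]: "rc C (a # L) z = rc C L (2 * C a - z)" by (simp add: rc_def)
lemma rc_append[simp]: "rc C (L1 @ L2) z = rc C L2 (rc C L1 z)" by (simp add: rc_def)

lemma rc_affine: "\<exists>s t. (s = 1 \<or> s = -1) \<and> (\<forall>z. rc C L z = s * z + t)"
proof (induction L)
  case Nil then show ?case by (rule exI[of _ 1]) auto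
next
  case (Cons a L)
  then obtain s t where st: "s = 1 \<or> s = -1" "\<forall>z. rc C L z = s * z + t" by blast
  show ?case
    by (rule exI[of _ "-s"], rule exI[of _ "2 * s * C a + t"]) (use st in \<open>auto simp: algebra_simps\<close>)
qed

lemma rc_dist: "\<bar>rc C L a - rc C L b\<bar> = \<bar>a - b\<bar>"
proof -
  obtain s t where st: "s = 1 \<or> s = -1" "\<forall>z. rc C L z = s * z + t" using rc_affine by blast
  show ?thesis using st by (auto simp: algebra_simps)
qed

lemma rc_refl_id: "rc C L (2 * c - v) = 2 * rc C L c - rc C L v"
proof -
  obtain s t where st: "s = 1 \<or> s = -1" "\<forall>z. rc C L z = s * z + t" using rc_affine by blast
  show ?thesis using st by (auto simp: algebra_simps)
qed

lemma sorted_split_filter: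
  fixes L :: "key list"
  assumes "sorted L"
  shows "L = filter (\<lambda>k. k \<le> x) L @ filter (\<lambda>k. x < k) L"
  using assms
proof (induction L)
  case Nil then show ?case by simp
next
  case (Cons a L)
  show ?case
  proof (cases "a \<le> x")
    case True then show ?thesis using Cons by auto
  next
    case False
    then have "\<forall>y\<in>set L. \<not> y \<le> x" using Cons.prems by auto
    then have "filter (\<lambda>k. k \<le> x) L = []" by (simp add: filter_empty_conv)
    moreover have "filter (\<lambda>k. x < k) L = L" using \<open>\<forall>y\<in>set L. \<not> y \<le> x\<close>
      by (simp add: filter_id_conv not_le)
    ultimately show ?thesis using False by auto
  qed
qed

lemma rc_G:
  fixes xs :: "key list"
  assumes "sorted xs" "\<forall>y\<in>set xs. x \<le> y"
  shows "rc C xs (2 * C x - z) = rc C (filter (\<lambda>k. x < k) xs) (2 * C x - rc C (filter (\<lambda>k. k \<le> x) xs) z)"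
  using assms
proof (induction xs arbitrary: z)
  case Nil then show ?case by simp
next
  case (Cons b ys)
  show ?case
  proof (cases "b = x")
    case True
    have IH: "rc C ys (2 * C x - (2 * C x - z)) = rc C (filter (\<lambda>k. x < k) ys) (2 * C x - rc C (filter (\<lambda>k. k \<le> x) ys) (2 * C x - z))"
      using Cons.IH[of "2 * C x - z"] Cons.prems by auto
    show ?thesis using True IH by simp
  next
    case False
    then have bx: "x < b" using Cons.prems by auto
    then have "\<forall>y\<in>set (b # ys). x < y" using Cons.prems by auto
    then have "filter (\<lambda>k. k \<le> x) (b # ys) = []" "filter (\<lambda>k. x < k) (b # ys) = b # ys"
      by (auto simp: filter_empty_conv filter_id_conv)
    then show ?thesis by simp
  qed
qed

lemma rc_insort:
  fixes L :: "key list"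
  assumes "sorted L"
  shows "rc C (insort x L) z = rc C (filter (\<lambda>k. x < k) L) (2 * C x - rc C (filter (\<lambda>k. k \<le> x) L) z)"
  using assms
proof (induction L arbitrary: z)
  case Nil then show ?case by simp
next
  case (Cons a L)
  show ?case
  proof (cases "x \<le> a")
    case True
    then have "\<forall>y\<in>set (a # L). x \<le> y" using Cons.prems by auto
    then show ?thesis using True rc_G[OF Cons.prems, of x C z] by simp
  next
    case False
    then show ?thesis using Cons by auto
  qed
qed

lemma L1raw:
  fixes A1 B1 l1 n1 A2 B2 l2 n2 p1 :: int
  assumes "B1 \<le> A1" "B2 \<le> A2" "2*l1 \<le> A1 - B1 + 1" "2*l2 \<le> A2 - B2 + 1"
    "n1 = 1 \<or> n1 = -1" "n2 = 1 \<or> n2 = -1" "p1 = 1 \<or> p1 = -1"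
    "(B2 \<le> B1 \<and> A1 \<le> A2) \<or> (B1 \<le> B2 \<and> A2 \<le> A1)"
  shows "(0 \<le> l1 \<and> 0 \<le> l2 \<and>
     (A1 \<le> A2 \<and> B1 \<le> B2 \<longrightarrow>
        (p1*n1*n2 = 1 \<longrightarrow> B1 + l1 \<le> B2 + l2 \<and> A1 - l1 \<le> A2 - l2) \<and>
        (p1*n1*n2 = -1 \<longrightarrow> A1 - l1 < B2 + l2)) \<and>
     (A1 \<le> A2 \<and> B1 \<ge> B2 \<longrightarrow>
        (p1*n1*n2 = 1 \<longrightarrow> 0 \<le> l2 - l1 \<and> l2 - l1 \<le> (A2-B2+1) - (A1-B1+1)) \<and>
        (p1*n1*n2 = -1 \<longrightarrow> l1 + l2 \<ge> (A1-B1+1))) \<and>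
     (A1 \<ge> A2 \<and> B1 \<le> B2 \<longrightarrow>
        (p1*n1*n2 = 1 \<longrightarrow> 0 \<le> l1 - l2 \<and> l1 - l2 \<le> (A1-B1+1) - (A2-B2+1)) \<and>
        (p1*n1*n2 = -1 \<longrightarrow> l1 + l2 \<ge> (A2-B2+1))))
   \<longleftrightarrow> (0 \<le> l1 \<and> 0 \<le> l2 \<and>
      \<bar>n2*(A2-B2+1-2*l2) - p1*(n1*(A1-B1+1-2*l1))\<bar> \<le> \<bar>(A1-B1+1) - (A2-B2+1)\<bar>)"
  using assms by (elim disjE; simp; arith)

definition um :: "vseg \<Rightarrow> int" where "um e = seglen e - 2 * segl e"
definition uu :: "vseg \<Rightarrow> int" where "uu e = segeta e * um e"
definition pp :: "vseg \<Rightarrow> int" where "pp e = sgnpow (segA e - segB e)"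

lemma RX1:
  assumes v1: "valid_vseg e1" and v2: "valid_vseg e2" and s: "Supp e1 \<subseteq> Supp e2"
  shows "segA (fst (row_exchange e1 e2)) = segA e2 \<and> segB (fst (row_exchange e1 e2)) = segB e2
    \<and> segA (snd (row_exchange e1 e2)) = segA e1 \<and> segB (snd (row_exchange e1 e2)) = segB e1
    \<and> valid_vseg (fst (row_exchange e1 e2)) \<and> valid_vseg (snd (row_exchange e1 e2))
    \<and> uu (snd (row_exchange e1 e2)) = pp e2 * uu e1
    \<and> uu (fst (row_exchange e1 e2)) = 2 * uu e1 - pp e1 * uu e2"
proof -
  obtain A1 B1 l1 n1 where e1: "e1 = VSeg A1 B1 l1 n1" by (cases e1)
  obtain A2 B2 l2 n2 where e2: "e2 = VSeg A2 B2 l2 n2" by (cases e2)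
  have p1: "sgnpow (A1 - B1) = 1 \<or> sgnpow (A1 - B1) = -1" by (rule sgnpow_cases)
  have p2: "sgnpow (A2 - B2) = 1 \<or> sgnpow (A2 - B2) = -1" by (rule sgnpow_cases)
  have q1: "sgnpow (A1 - B1 + 1) = - sgnpow (A1 - B1)" by (rule sgnpow_Suc)
  show ?thesis using v1 v2 s p1 p2 q1
    unfolding e1 e2 row_exchange_def valid_vseg_def seglen_def uu_def um_def pp_def epsilon_def Let_def
    by (auto split: if_splits simp: algebra_simps)
qed

lemma RX2:
  assumes v1: "valid_vseg e1" and v2: "valid_vseg e2" and s: "\<not> Supp e1 \<subseteq> Supp e2"
  shows "segA (fst (row_exchange e1 e2)) = segA e2 \<and> segB (fst (row_exchange e1 e2)) = segB e2
    \<and> segA (snd (row_exchange e1 e2)) = segA e1 \<and> segB (snd (row_exchange e1 e2)) = segB e1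
    \<and> valid_vseg (fst (row_exchange e1 e2)) \<and> valid_vseg (snd (row_exchange e1 e2))
    \<and> uu (fst (row_exchange e1 e2)) = pp e1 * uu e2
    \<and> uu (snd (row_exchange e1 e2)) = - pp e2 * uu e1 + 2 * pp e1 * pp e2 * uu e2"
proof -
  obtain A1 B1 l1 n1 where e1: "e1 = VSeg A1 B1 l1 n1" by (cases e1)
  obtain A2 B2 l2 n2 where e2: "e2 = VSeg A2 B2 l2 n2" by (cases e2)
  have p1: "sgnpow (A1 - B1) = 1 \<or> sgnpow (A1 - B1) = -1" by (rule sgnpow_cases)
  have p2: "sgnpow (A2 - B2) = 1 \<or> sgnpow (A2 - B2) = -1" by (rule sgnpow_cases)
  have q2: "sgnpow (A2 - B2 + 1) = - sgnpow (A2 - B2)" by (rule sgnpow_Suc)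
  show ?thesis using v1 v2 s p1 p2 q2
    unfolding e1 e2 row_exchange_def valid_vseg_def seglen_def uu_def um_def pp_def epsilon_def Let_def
    by (auto split: if_splits simp: algebra_simps)
qed


definition inr :: "key \<Rightarrow> key \<Rightarrow> bool" where "inr k k' \<longleftrightarrow> kin k k' \<and> k \<noteq> k'"

definition Kp :: "key set \<Rightarrow> (key \<Rightarrow> int) \<Rightarrow> key \<Rightarrow> bool" where
  "Kp K C m \<longleftrightarrow> (\<forall>k\<in>K. snd k \<le> - fst k) \<and> (\<forall>k\<in>K. \<forall>k'\<in>K. kin k k' \<or> kin k' k)
     \<and> (\<forall>k\<in>K. \<forall>k'\<in>K. kin k' k \<longrightarrow> \<bar>C k - C k'\<bar> \<le> klen k - klen k')
     \<and> m \<in> K \<and> (\<forall>k\<in>K. kin m k) \<and> \<bar>C m\<bar> \<le> klen m"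

lemma kin_antisym: "kin k k' \<Longrightarrow> kin k' k \<Longrightarrow> k = k'"
  by (auto simp: kin_def prod_eq_iff)

lemma kin_trans: "kin k k' \<Longrightarrow> kin k' k'' \<Longrightarrow> kin k k''"
  by (auto simp: kin_def)

lemma lex_in:
  assumes "Kp K C m" "k \<in> K" "k' \<in> K"
  shows "inr k k' \<longleftrightarrow> k' < k"
proof -
  have c: "kin k k' \<or> kin k' k" using assms unfolding Kp_def by blast
  obtain a b where k: "k = (a, b)" by (cases k)
  obtain a' b' where k': "k' = (a', b')" by (cases k')
  show ?thesis using c unfolding k k' inr_def kin_def by auto
qed

lemma lex_in_le:
  assumes "Kp K C m" "k \<in> K" "k' \<in> K"
  shows "kin k k' \<longleftrightarrow> k' \<le> k"
proof -
  have c: "kin k k' \<or> kin k' k" using assms unfolding Kp_def by blast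
  obtain a b where k: "k = (a, b)" by (cases k)
  obtain a' b' where k': "k' = (a', b')" by (cases k')
  show ?thesis using c unfolding k k' kin_def by auto
qed

lemma IL:
  assumes K: "Kp K C m"
  shows "set S \<subseteq> K \<Longrightarrow> sorted S \<Longrightarrow> x \<in> K \<Longrightarrow> \<forall>s\<in>set S. inr s x \<Longrightarrow> t \<in> K \<Longrightarrow> kin t x
    \<Longrightarrow> \<forall>s\<in>set S. kin t s \<Longrightarrow> \<bar>rc C S (C x) - C t\<bar> \<le> klen x - klen t"
proof (induction S arbitrary: t rule: rev_induct)
  case Nil
  have "\<bar>C x - C t\<bar> \<le> klen x - klen t" using K Nil.prems(3,5,6) unfolding Kp_def by blast
  then show ?case by simp
next
  case (snoc s S)
  have sS: "sorted S" "\<forall>y\<in>set S. y \<le> s" using snoc.prems(2) by (auto simp: sorted_append)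
  have sK: "s \<in> K" using snoc.prems(1) by auto
  have "\<forall>s'\<in>set S. kin s s'"
  proof
    fix s' assume "s' \<in> set S"
    then show "kin s s'" using sS(2) snoc.prems(1) sK lex_in_le[OF K, of s s'] by auto
  qed
  moreover have "kin s x" using snoc.prems(4) by (auto simp: inr_def)
  ultimately have IH: "\<bar>rc C S (C x) - C s\<bar> \<le> klen x - klen s"
    using snoc.IH[of s] snoc.prems sS sK by auto
  have "kin t s" using snoc.prems(7) by auto
  then have "\<bar>C s - C t\<bar> \<le> klen s - klen t" using K sK snoc.prems(5) unfolding Kp_def by blast
  then show ?case using IH by simp
qed

definition Sx :: "vseg list \<Rightarrow> vseg \<Rightarrow> key list" where
  "Sx xs e = sort (filter (\<lambda>k. inr k (key e)) (map key xs))"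

lemma sort_mset_eq: "mset xs = mset ys \<Longrightarrow> sort xs = sort ys"
  by (metis sorted_list_of_multiset_mset)

lemma Sx_sorted: "sorted (Sx xs e)" by (simp add: Sx_def)

lemma Sx_set: "set (Sx xs e) \<subseteq> key ` set xs" "\<forall>s\<in>set (Sx xs e). inr s (key e)"
  by (auto simp: Sx_def)

lemma Sx_key: "key e = key e' \<Longrightarrow> Sx xs e = Sx xs e'" by (simp add: Sx_def)

lemma Sx_snoc_not: "\<not> inr (key a) (key e) \<Longrightarrow> Sx (xs @ [a]) e = Sx xs e"
  by (simp add: Sx_def)

lemma Sx_snoc_in: "inr (key a) (key e) \<Longrightarrow> Sx (xs @ [a]) e = insort (key a) (Sx xs e)"
proof -
  assume h: "inr (key a) (key e)"
  have "Sx (xs @ [a]) e = sort (filter (\<lambda>k. inr k (key e)) (map key xs) @ [key a])"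
    using h by (simp add: Sx_def)
  also have "\<dots> = sort (key a # filter (\<lambda>k. inr k (key e)) (map key xs))"
    by (rule sort_mset_eq) simp
  finally show ?thesis by (simp add: Sx_def)
qed

lemma Sx_filter:
  assumes K: "Kp K C m" and xsK: "key ` set xs \<subseteq> K" and aK: "key a \<in> K" and bK: "key b \<in> K"
    and ba: "inr (key b) (key a)"
  shows "filter (\<lambda>k. key b < k) (Sx xs a) = Sx xs b"
proof -
  have "filter (\<lambda>k. key b < k) (Sx xs a) = sort (filter (\<lambda>k. inr k (key a) \<and> key b < k) (map key xs))"
    by (simp add: Sx_def filter_sort)
  also have "filter (\<lambda>k. inr k (key a) \<and> key b < k) (map key xs) = filter (\<lambda>k. inr k (key b)) (map key xs)"
  proof (rule filter_cong[OF refl])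
    fix k assume "k \<in> set (map key xs)"
    then have kK: "k \<in> K" using xsK by auto
    have e1: "key b < k \<longleftrightarrow> inr k (key b)" using lex_in[OF K kK bK] by simp
    have "inr k (key b) \<Longrightarrow> inr k (key a)"
      using ba kin_trans kin_antisym unfolding inr_def by blast
    then show "(inr k (key a) \<and> key b < k) = inr k (key b)" using e1 by blast
  qed
  finally show ?thesis by (simp add: Sx_def)
qed

definition Pp :: "vseg list \<Rightarrow> int" where "Pp xs = prod_list (map pp xs)"

lemma pp_pm: "pp e = 1 \<or> pp e = -1" by (simp add: pp_def sgnpow_cases)

lemma Pp_pm: "Pp xs = 1 \<or> Pp xs = -1"
proof (induction xs)
  case Nil then show ?case by (simp add: Pp_def)
next
  case (Cons a xs) then show ?case using pp_pm[of a] by (auto simp: Pp_def)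
qed

lemma Pp_snoc[simp]: "Pp (xs @ [a]) = Pp xs * pp a" by (simp add: Pp_def)
lemma Pp_append: "Pp (xs @ ys) = Pp xs * Pp ys" by (simp add: Pp_def)
lemma Pp_Cons: "Pp (a # xs) = pp a * Pp xs" by (simp add: Pp_def)

definition Inv :: "key set \<Rightarrow> (key \<Rightarrow> int) \<Rightarrow> vseg list \<Rightarrow> bool" where
  "Inv K C F \<longleftrightarrow> (\<forall>e\<in>set F. valid_vseg e \<and> key e \<in> K) \<and>
     (\<forall>xs e ys. F = xs @ e # ys \<longrightarrow> uu e * Pp xs = rc C (Sx xs e) (C (key e)))"

lemma klen_key[simp]: "klen (key e) = seglen e" by (simp add: klen_def key_def seglen_def)

lemma supp_kin: "valid_vseg a \<Longrightarrow> Supp a \<subseteq> Supp b \<longleftrightarrow> kin (key a) (key b)"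
  by (auto simp: Supp_def valid_vseg_def kin_def key_def)

lemma uu_abs: "valid_vseg e \<Longrightarrow> \<bar>uu e\<bar> = um e \<and> 0 \<le> um e"
  by (auto simp: valid_vseg_def uu_def um_def seglen_def)

lemma ext_iff: "valid_vseg e \<Longrightarrow> 0 \<le> segl e \<longleftrightarrow> \<bar>uu e\<bar> \<le> seglen e"
  by (auto simp: valid_vseg_def uu_def um_def seglen_def)

lemma L1:
  assumes "valid_vseg a" "valid_vseg b" "kin (key a) (key b) \<or> kin (key b) (key a)"
  shows "NV_pair a b \<longleftrightarrow> 0 \<le> segl a \<and> 0 \<le> segl b \<and> \<bar>uu b - pp a * uu a\<bar> \<le> \<bar>seglen a - seglen b\<bar>"
proof -
  obtain A1 B1 l1 n1 where e1: "a = VSeg A1 B1 l1 n1" by (cases a)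
  obtain A2 B2 l2 n2 where e2: "b = VSeg A2 B2 l2 n2" by (cases b)
  have h: "B1 \<le> A1" "B2 \<le> A2" "2*l1 \<le> A1 - B1 + 1" "2*l2 \<le> A2 - B2 + 1"
    "n1 = 1 \<or> n1 = -1" "n2 = 1 \<or> n2 = -1"
    "(B2 \<le> B1 \<and> A1 \<le> A2) \<or> (B1 \<le> B2 \<and> A2 \<le> A1)"
    using assms unfolding e1 e2 valid_vseg_def seglen_def kin_def key_def by auto
  show ?thesis
    using L1raw[OF h(1-6) sgnpow_cases[of "A1 - B1"] h(7)]
    unfolding e1 e2 NV_pair_def Let_def extended_def epsilon_def uu_def um_def pp_def seglen_def
    by simp
qed

lemma split4:
  assumes "xs' @ e # ys' = xs @ p # q # ys"
  shows "(\<exists>ys''. xs = xs' @ e # ys'' \<and> ys' = ys'' @ p # q # ys) \<or> (xs' = xs \<and> e = p \<and> ys' = q # ys)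
    \<or> (xs' = xs @ [p] \<and> e = q \<and> ys' = ys) \<or> (\<exists>mid. xs' = xs @ p # q # mid \<and> ys = mid @ e # ys')"
  using assms by (auto simp: append_eq_append_conv2 Cons_eq_append_conv append_eq_Cons_conv)

lemma split_nth: "Suc k < length F \<Longrightarrow> \<exists>xs a b ys. F = xs @ a # b # ys \<and> length xs = k"
  apply (rule exI[of _ "take k F"], rule exI[of _ "F ! k"], rule exI[of _ "F ! Suc k"],
      rule exI[of _ "drop (Suc (Suc k)) F"])
  by (simp add: Cons_nth_drop_Suc)

lemma Rsplit:
  assumes "R_step F F'"
  shows "\<exists>xs a b ys. F = xs @ a # b # ys \<and> F' = xs @ fst (row_exchange a b) # snd (row_exchange a b) # ys"
proof -
  obtain k where k: "Suc k < length F"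
    "F' = F[k := fst (row_exchange (F!k) (F!Suc k)), Suc k := snd (row_exchange (F!k) (F!Suc k))]"
    using assms unfolding R_step_def by blast
  obtain xs a b ys where s: "F = xs @ a # b # ys" "length xs = k" using split_nth[OF k(1)] by blast
  have "F!k = a" "F!Suc k = b" using s by (auto simp: nth_append)
  then have "F' = xs @ fst (row_exchange a b) # snd (row_exchange a b) # ys"
    using k(2) s by (simp add: list_update_append)
  then show ?thesis using s by blast
qed

lemma R_step_len: "R_step F F' \<Longrightarrow> length F' = length F"
  unfolding R_step_def by auto

lemma ext_rc:
  assumes K: "Kp K C m" and xsK: "key ` set xs \<subseteq> K" and eK: "key e \<in> K"
  shows "\<bar>rc C (Sx xs e) (C (key e))\<bar> \<le> klen (key e)"
proof -
  have mK: "m \<in> K" "\<forall>k\<in>K. kin m k" "\<bar>C m\<bar> \<le> klen m" using K unfolding Kp_def by auto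
  have sK: "set (Sx xs e) \<subseteq> K" using Sx_set(1)[of xs e] xsK by auto
  have "\<bar>rc C (Sx xs e) (C (key e)) - C m\<bar> \<le> klen (key e) - klen m"
    apply (rule IL[OF K sK Sx_sorted eK Sx_set(2) mK(1)])
    using mK sK eK by auto
  then show ?thesis using mK(3) by simp
qed

lemma split_rc:
  fixes L :: "key list"
  assumes "sorted L"
  shows "rc C L z = rc C (filter (\<lambda>k. x < k) L) (rc C (filter (\<lambda>k. k \<le> x) L) z)"
proof -
  have "rc C L z = rc C (filter (\<lambda>k. k \<le> x) L @ filter (\<lambda>k. x < k) L) z"
    using arg_cong[OF sorted_split_filter[OF assms, of x], of "\<lambda>l. rc C l z"] by simp
  then show ?thesis by simp
qed

lemma inr_not_sym: "inr k k' \<Longrightarrow> \<not> inr k' k"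
  using kin_antisym unfolding inr_def by blast

lemma pair_bound:
  assumes K: "Kp K C m" and xsK: "key ` set xs \<subseteq> K" and aK: "key a \<in> K" and bK: "key b \<in> K"
  shows "\<bar>rc C (Sx (xs @ [a]) b) (C (key b)) - rc C (Sx xs a) (C (key a))\<bar> \<le> \<bar>klen (key a) - klen (key b)\<bar>"
proof -
  have cmp: "kin (key a) (key b) \<or> kin (key b) (key a)" using K aK bK unfolding Kp_def by blast
  consider (eq) "key a = key b" | (ba) "inr (key b) (key a)" | (ab) "inr (key a) (key b)"
    using cmp unfolding inr_def by (cases "key a = key b") auto
  then show ?thesis
  proof cases
    case eq
    then have "Sx (xs @ [a]) b = Sx xs a" using Sx_snoc_not[of a b xs] Sx_key[of b a xs]
      by (simp add: inr_def)
    then show ?thesis using eq by simp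
  next
    case ba
    have s1: "Sx (xs @ [a]) b = Sx xs b" using Sx_snoc_not inr_not_sym[OF ba] by blast
    have s2: "filter (\<lambda>k. key b < k) (Sx xs a) = Sx xs b" using Sx_filter[OF K xsK aK bK ba] .
    define v where "v = rc C (filter (\<lambda>k. k \<le> key b) (Sx xs a)) (C (key a))"
    have r: "rc C (Sx xs a) (C (key a)) = rc C (Sx xs b) v"
      using split_rc[OF Sx_sorted, of C xs a "C (key a)" "key b"] s2 v_def by simp
    have sK: "set (filter (\<lambda>k. k \<le> key b) (Sx xs a)) \<subseteq> K" using Sx_set(1)[of xs a] xsK by auto
    have "\<bar>v - C (key b)\<bar> \<le> klen (key a) - klen (key b)"
      unfolding v_def
    proof (rule IL[OF K sK])
      show "sorted (filter (\<lambda>k. k \<le> key b) (Sx xs a))" using Sx_sorted by (simp add: sorted_wrt_filter)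
      show "\<forall>s\<in>set (filter (\<lambda>k. k \<le> key b) (Sx xs a)). inr s (key a)" using Sx_set(2)[of xs a] by auto
      show "kin (key b) (key a)" using ba by (simp add: inr_def)
      show "\<forall>s\<in>set (filter (\<lambda>k. k \<le> key b) (Sx xs a)). kin (key b) s"
        using sK lex_in_le[OF K bK] by auto
    qed (use aK bK in auto)
    then show ?thesis using s1 r rc_dist[of C "Sx xs b" "C (key b)" v] by simp
  next
    case ab
    have s1: "Sx (xs @ [a]) b = insort (key a) (Sx xs b)" using Sx_snoc_in[OF ab] .
    have s2: "filter (\<lambda>k. key a < k) (Sx xs b) = Sx xs a" using Sx_filter[OF K xsK bK aK ab] .
    define v where "v = rc C (filter (\<lambda>k. k \<le> key a) (Sx xs b)) (C (key b))"
    have r: "rc C (Sx (xs @ [a]) b) (C (key b)) = rc C (Sx xs a) (2 * C (key a) - v)"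
      using rc_insort[OF Sx_sorted, of C "key a" xs b "C (key b)"] s1 s2 v_def by simp
    have sK: "set (filter (\<lambda>k. k \<le> key a) (Sx xs b)) \<subseteq> K" using Sx_set(1)[of xs b] xsK by auto
    have "\<bar>v - C (key a)\<bar> \<le> klen (key b) - klen (key a)"
      unfolding v_def
    proof (rule IL[OF K sK])
      show "sorted (filter (\<lambda>k. k \<le> key a) (Sx xs b))" using Sx_sorted by (simp add: sorted_wrt_filter)
      show "\<forall>s\<in>set (filter (\<lambda>k. k \<le> key a) (Sx xs b)). inr s (key b)" using Sx_set(2)[of xs b] by auto
      show "kin (key a) (key b)" using ab by (simp add: inr_def)
      show "\<forall>s\<in>set (filter (\<lambda>k. k \<le> key a) (Sx xs b)). kin (key a) s"
        using sK lex_in_le[OF K aK] by auto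
    qed (use aK bK in auto)
    then show ?thesis using r rc_dist[of C "Sx xs a" "2 * C (key a) - v" "C (key a)"] by simp
  qed
qed

lemma adj:
  assumes K: "Kp K C m" and I: "Inv K C F" and F: "F = xs @ a # b # ys"
  shows "NV_pair a b"
proof -
  have v: "valid_vseg a" "key a \<in> K" "valid_vseg b" "key b \<in> K" "key ` set xs \<subseteq> K"
    using I F unfolding Inv_def by auto
  have W: "\<And>xs' e ys'. F = xs' @ e # ys' \<Longrightarrow> uu e * Pp xs' = rc C (Sx xs' e) (C (key e))"
    using I unfolding Inv_def by blast
  have Wa: "uu a * Pp xs = rc C (Sx xs a) (C (key a))" using W[of xs a "b # ys"] F by simp
  have Wb: "uu b * Pp xs * pp a = rc C (Sx (xs @ [a]) b) (C (key b))" using W[of "xs @ [a]" b ys] F by simp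
  have xsb: "key ` set (xs @ [a]) \<subseteq> K" using v by auto
  have ea: "\<bar>uu a * Pp xs\<bar> \<le> seglen a" using Wa ext_rc[OF K v(5) v(2)] by simp
  have eb: "\<bar>uu b * Pp xs * pp a\<bar> \<le> seglen b" using Wb ext_rc[OF K xsb v(4)] by simp
  have ea': "\<bar>uu a\<bar> \<le> seglen a" using ea Pp_pm[of xs] by (auto simp: abs_mult)
  have eb': "\<bar>uu b\<bar> \<le> seglen b" using eb Pp_pm[of xs] pp_pm[of a] by (auto simp: abs_mult)
  have d: "\<bar>uu b * Pp xs * pp a - uu a * Pp xs\<bar> \<le> \<bar>seglen a - seglen b\<bar>"
    using pair_bound[OF K v(5) v(2) v(4)] Wa Wb by simp
  have d': "\<bar>uu b - pp a * uu a\<bar> \<le> \<bar>seglen a - seglen b\<bar>"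
    using d Pp_pm[of xs] pp_pm[of a] by (auto simp: algebra_simps)
  have cmp: "kin (key a) (key b) \<or> kin (key b) (key a)" using K v unfolding Kp_def by blast
  show ?thesis using L1[OF v(1) v(3) cmp] ext_iff[OF v(1)] ext_iff[OF v(3)] ea' eb' d' by simp
qed

lemma key_eqs:
  assumes "segA f = segA e" "segB f = segB e"
  shows "key f = key e" "pp f = pp e"
  using assms by (auto simp: key_def pp_def)

lemma pres:
  assumes K: "Kp K C m" and I: "Inv K C F" and R: "R_step F F'"
  shows "Inv K C F'"
proof -
  obtain xs a b ys where F: "F = xs @ a # b # ys"
    and F': "F' = xs @ fst (row_exchange a b) # snd (row_exchange a b) # ys"
    using Rsplit[OF R] by blast
  define f2 where "f2 = fst (row_exchange a b)"
  define f1 where "f1 = snd (row_exchange a b)"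
  have v: "valid_vseg a" "key a \<in> K" "valid_vseg b" "key b \<in> K" "key ` set xs \<subseteq> K"
    using I F unfolding Inv_def by auto
  have W: "\<And>xs' e ys'. F = xs' @ e # ys' \<Longrightarrow> uu e * Pp xs' = rc C (Sx xs' e) (C (key e))"
    using I unfolding Inv_def by blast
  have Wa: "uu a * Pp xs = rc C (Sx xs a) (C (key a))" using W[of xs a "b # ys"] F by simp
  have Wb: "uu b * Pp xs * pp a = rc C (Sx (xs @ [a]) b) (C (key b))" using W[of "xs @ [a]" b ys] F by simp
  have RX: "segA f2 = segA b \<and> segB f2 = segB b \<and> segA f1 = segA a \<and> segB f1 = segB a
     \<and> valid_vseg f2 \<and> valid_vseg f1"
  proof (cases "Supp a \<subseteq> Supp b")
    case True then show ?thesis using RX1[OF v(1) v(3) True] unfolding f1_def f2_def by blast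
  next
    case False then show ?thesis using RX2[OF v(1) v(3) False] unfolding f1_def f2_def by blast
  qed
  have k2: "key f2 = key b" "pp f2 = pp b" using key_eqs[of f2 b] RX by simp_all
  have k1: "key f1 = key a" "pp f1 = pp a" using key_eqs[of f1 a] RX by simp_all
  have cmp: "kin (key a) (key b) \<or> kin (key b) (key a)" using K v unfolding Kp_def by blast
  have ppa: "pp a = 1 \<or> pp a = -1" and ppb: "pp b = 1 \<or> pp b = -1" and PP: "Pp xs = 1 \<or> Pp xs = -1"
    using pp_pm[of a] pp_pm[of b] Pp_pm[of xs] by auto
  have g2: "uu f2 * Pp xs = rc C (Sx xs f2) (C (key f2))"
   and g3: "uu f1 * Pp (xs @ [f2]) = rc C (Sx (xs @ [f2]) f1) (C (key f1))"
  proof -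
    have S2: "Sx xs f2 = Sx xs b" using Sx_key k2 by blast
    have S3: "Sx (xs @ [f2]) f1 = Sx (xs @ [b]) a" unfolding Sx_def using k1 k2 by simp
    show "uu f2 * Pp xs = rc C (Sx xs f2) (C (key f2))"
     and "uu f1 * Pp (xs @ [f2]) = rc C (Sx (xs @ [f2]) f1) (C (key f1))"
    proof (atomize (full), cases "Supp a \<subseteq> Supp b")
      case True
      have u: "uu f1 = pp b * uu a" "uu f2 = 2 * uu a - pp a * uu b"
        using RX1[OF v(1) v(3) True] unfolding f1_def f2_def by auto
      have kab: "kin (key a) (key b)" using True supp_kin[OF v(1)] by blast
      have nba: "\<not> inr (key b) (key a)" using kab kin_antisym unfolding inr_def by blast
      have e3: "uu f1 * Pp (xs @ [f2]) = rc C (Sx (xs @ [f2]) f1) (C (key f1))"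
      proof -
        have "Sx (xs @ [f2]) f1 = Sx xs a" using S3 Sx_snoc_not[OF nba, of xs] by simp
        moreover have "uu f1 * Pp (xs @ [f2]) = uu a * Pp xs" using u(1) k2(2) ppb by auto
        ultimately show ?thesis using Wa k1 by simp
      qed
      have e2: "uu f2 * Pp xs = rc C (Sx xs b) (C (key b))"
      proof (cases "key a = key b")
        case True
        have "Sx (xs @ [a]) b = Sx xs a" using Sx_snoc_not[of a b xs] Sx_key[of b a xs] True
          by (simp add: inr_def)
        then have "uu b * Pp xs * pp a = uu a * Pp xs" using Wa Wb True by simp
        moreover have "uu f2 * Pp xs = 2*(uu a * Pp xs) - uu b * Pp xs * pp a" unfolding u(2) by (simp add: algebra_simps)
        ultimately show ?thesis using Wa True Sx_key[of a b xs] by simp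
      next
        case False
        then have ab: "inr (key a) (key b)" using kab by (simp add: inr_def)
        have s1: "Sx (xs @ [a]) b = insort (key a) (Sx xs b)" using Sx_snoc_in[OF ab] .
        have s2: "filter (\<lambda>k. key a < k) (Sx xs b) = Sx xs a" using Sx_filter[OF K v(5) v(4) v(2) ab] .
        define vv where "vv = rc C (filter (\<lambda>k. k \<le> key a) (Sx xs b)) (C (key b))"
        have r: "uu b * Pp xs * pp a = rc C (Sx xs a) (2 * C (key a) - vv)"
          using Wb rc_insort[OF Sx_sorted, of C "key a" xs b "C (key b)"] s1 s2 vv_def by simp
        have r2: "rc C (Sx xs b) (C (key b)) = rc C (Sx xs a) vv"
          using split_rc[OF Sx_sorted, of C xs b "C (key b)" "key a"] s2 vv_def by simp
        have "uu f2 * Pp xs = 2*(uu a * Pp xs) - uu b * Pp xs * pp a" unfolding u(2) by (simp add: algebra_simps)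
        then show ?thesis using r r2 Wa rc_refl_id[of C "Sx xs a" "C (key a)" vv]
          by linarith
      qed
      show "uu f2 * Pp xs = rc C (Sx xs f2) (C (key f2)) \<and>
            uu f1 * Pp (xs @ [f2]) = rc C (Sx (xs @ [f2]) f1) (C (key f1))"
        using e2 e3 S2 k2 by simp
    next
      case False
      have u: "uu f2 = pp a * uu b" "uu f1 = - pp b * uu a + 2 * pp a * pp b * uu b"
        using RX2[OF v(1) v(3) False] unfolding f1_def f2_def by auto
      have kba: "kin (key b) (key a)" using False supp_kin[OF v(1)] cmp by blast
      have ba: "inr (key b) (key a)" using False kba supp_kin[OF v(1)] unfolding inr_def by auto
      have s0: "Sx (xs @ [a]) b = Sx xs b" using Sx_snoc_not inr_not_sym[OF ba] by blast
      have e2: "uu f2 * Pp xs = rc C (Sx xs b) (C (key b))"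
        using Wb s0 u ppa by (auto simp: algebra_simps)
      have s1: "Sx (xs @ [b]) a = insort (key b) (Sx xs a)" using Sx_snoc_in[OF ba] .
      have s2: "filter (\<lambda>k. key b < k) (Sx xs a) = Sx xs b" using Sx_filter[OF K v(5) v(2) v(4) ba] .
      define vv where "vv = rc C (filter (\<lambda>k. k \<le> key b) (Sx xs a)) (C (key a))"
      have r: "rc C (Sx (xs @ [b]) a) (C (key a)) = rc C (Sx xs b) (2 * C (key b) - vv)"
        using rc_insort[OF Sx_sorted, of C "key b" xs a "C (key a)"] s1 s2 vv_def by simp
      have r2: "rc C (Sx xs a) (C (key a)) = rc C (Sx xs b) vv"
        using split_rc[OF Sx_sorted, of C xs a "C (key a)" "key b"] s2 vv_def by simp
      have wb': "uu b * Pp xs * pp a = rc C (Sx xs b) (C (key b))" using Wb s0 by simp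
      have e3: "uu f1 * Pp (xs @ [f2]) = rc C (Sx (xs @ [b]) a) (C (key a))"
      proof -
        have "uu f1 * Pp (xs @ [f2]) = - (uu a * Pp xs) + 2 * (uu b * Pp xs * pp a)"
          using k2(2) ppb unfolding Pp_snoc u(2) by (auto simp: algebra_simps)
        also have "\<dots> = rc C (Sx (xs @ [b]) a) (C (key a))"
          using Wa wb' r r2 rc_refl_id[of C "Sx xs b" "C (key b)" vv] by simp
        finally show ?thesis .
      qed
      show "uu f2 * Pp xs = rc C (Sx xs f2) (C (key f2)) \<and>
            uu f1 * Pp (xs @ [f2]) = rc C (Sx (xs @ [f2]) f1) (C (key f1))"
        using e2 e3 S2 S3 k1 k2 by simp
    qed
  qed
  have setF': "\<forall>e\<in>set F'. valid_vseg e \<and> key e \<in> K"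
  proof -
    have F'': "F' = xs @ f2 # f1 # ys" using F' f1_def f2_def by simp
    have "\<forall>e\<in>set F. valid_vseg e \<and> key e \<in> K" using I unfolding Inv_def by blast
    then show ?thesis using F F'' RX k1 k2 v by auto
  qed
  have "\<forall>xs' e ys'. F' = xs' @ e # ys' \<longrightarrow> uu e * Pp xs' = rc C (Sx xs' e) (C (key e))"
  proof (intro allI impI)
    fix xs' e ys'
    assume h: "F' = xs' @ e # ys'"
    then have hh: "xs' @ e # ys' = xs @ f2 # f1 # ys" using F' f1_def f2_def by simp
    consider (c1) ys'' where "xs = xs' @ e # ys''" "ys' = ys'' @ f2 # f1 # ys"
      | (c2) "xs' = xs" "e = f2" "ys' = f1 # ys"
      | (c3) "xs' = xs @ [f2]" "e = f1" "ys' = ys"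
      | (c4) mid where "xs' = xs @ f2 # f1 # mid" "ys = mid @ e # ys'"
      using split4[OF hh] by blast
    then show "uu e * Pp xs' = rc C (Sx xs' e) (C (key e))"
    proof cases
      case c1
      have "F = xs' @ e # (ys'' @ a # b # ys)" using F c1(1) by simp
      then show ?thesis by (rule W)
    next
      case c2 then show ?thesis using g2 by simp
    next
      case c3 then show ?thesis using g3 by simp
    next
      case c4
      have w: "uu e * Pp (xs @ a # b # mid) = rc C (Sx (xs @ a # b # mid) e) (C (key e))"
      proof -
        have "F = (xs @ a # b # mid) @ e # ys'" using F c4(2) by simp
        then show ?thesis by (rule W)
      qed
      have p: "Pp (xs @ f2 # f1 # mid) = Pp (xs @ a # b # mid)"
        using k1 k2 by (simp add: Pp_append Pp_Cons ac_simps)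
      have s: "Sx (xs @ f2 # f1 # mid) e = Sx (xs @ a # b # mid) e"
        unfolding Sx_def by (rule sort_mset_eq) (simp add: k1 k2)
      show ?thesis using w p s c4 by simp
    qed
  qed
  then show ?thesis using setF' unfolding Inv_def by blast
qed

definition wE :: "vseg list \<Rightarrow> nat \<Rightarrow> int" where "wE E i = uu (E!i) * Pp (take i E)"

lemma kin_len: "kin (key a) (key b) \<Longrightarrow> seglen a \<le> seglen b"
  by (auto simp: kin_def key_def seglen_def)

lemma wE_step:
  assumes "Suc j < length E"
  shows "\<bar>wE E (Suc j) - wE E j\<bar> = \<bar>uu (E!Suc j) - pp (E!j) * uu (E!j)\<bar>"
proof -
  have w: "wE E (Suc j) = uu (E!Suc j) * Pp (take j E) * pp (E!j)"
    using assms by (simp add: wE_def take_Suc_conv_app_nth)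
  show ?thesis using w Pp_pm[of "take j E"] pp_pm[of "E!j"] by (auto simp: wE_def algebra_simps)
qed

lemma chain:
  assumes hv: "\<forall>e\<in>set E. valid_vseg e"
    and hc: "\<forall>i. Suc i < length E \<longrightarrow> Supp (E!Suc i) \<subseteq> Supp (E!i)" and hn: "NVt E"
  shows "j < length E \<Longrightarrow> i \<le> j \<Longrightarrow> kin (key (E!j)) (key (E!i)) \<and> \<bar>wE E i - wE E j\<bar> \<le> seglen (E!i) - seglen (E!j)"
proof (induction j)
  case 0 then show ?case by (simp add: kin_def)
next
  case (Suc j)
  show ?case
  proof (cases "i = Suc j")
    case True then show ?thesis by (simp add: kin_def)
  next
    case False
    then have ij: "i \<le> j" using Suc.prems by simp
    have jl: "j < length E" using Suc.prems by simp
    have IH: "kin (key (E!j)) (key (E!i)) \<and> \<bar>wE E i - wE E j\<bar> \<le> seglen (E!i) - seglen (E!j)"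
      using Suc.IH ij jl by simp
    have va: "valid_vseg (E!j)" "valid_vseg (E!Suc j)" using hv Suc.prems jl by auto
    have sub: "kin (key (E!Suc j)) (key (E!j))" using hc Suc.prems supp_kin va by auto
    have nv: "NV_pair (E!j) (E!Suc j)" using hn Suc.prems unfolding NVt_def by auto
    have d: "\<bar>uu (E!Suc j) - pp (E!j) * uu (E!j)\<bar> \<le> \<bar>seglen (E!j) - seglen (E!Suc j)\<bar>"
      using L1[OF va] sub nv by auto
    have ln: "seglen (E!Suc j) \<le> seglen (E!j)" using sub kin_len by blast
    have "\<bar>wE E (Suc j) - wE E j\<bar> \<le> seglen (E!j) - seglen (E!Suc j)"
      using d ln wE_step[OF Suc.prems(1)] by simp
    then show ?thesis using IH sub kin_trans by fastforce
  qed
qed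

lemma tie:
  assumes hv: "\<forall>e\<in>set E. valid_vseg e"
    and hc: "\<forall>i. Suc i < length E \<longrightarrow> Supp (E!Suc i) \<subseteq> Supp (E!i)" and hn: "NVt E"
    and i: "i < length E" and j: "j < length E" and k: "key (E!i) = key (E!j)"
  shows "wE E i = wE E j"
proof -
  have l: "seglen (E!i) = seglen (E!j)" using k klen_key by metis
  show ?thesis
  proof (cases "i \<le> j")
    case True then show ?thesis using chain[OF hv hc hn j True] l by simp
  next
    case False then show ?thesis using chain[OF hv hc hn i, of j] l by simp
  qed
qed

lemma init:
  assumes hv: "\<forall>e\<in>set E. valid_vseg e"
    and hc: "\<forall>i. Suc i < length E \<longrightarrow> Supp (E!Suc i) \<subseteq> Supp (E!i)" and hn: "NVt E"
    and len: "2 \<le> length E"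
  shows "\<exists>K C m. Kp K C m \<and> Inv K C E"
proof -
  define K where "K = key ` set E"
  define C where "C k = wE E (SOME i. i < length E \<and> key (E!i) = k)" for k
  define m where "m = key (E ! (length E - 1))"
  note ch = chain[OF hv hc hn]
  have Ceq: "C (key (E!i)) = wE E i" if i: "i < length E" for i
  proof -
    have "\<exists>j. j < length E \<and> key (E!j) = key (E!i)" using i by blast
    then have "(SOME j. j < length E \<and> key (E!j) = key (E!i)) < length E \<and>
        key (E!(SOME j. j < length E \<and> key (E!j) = key (E!i))) = key (E!i)" by (rule someI_ex)
    then show ?thesis unfolding C_def using tie[OF hv hc hn _ i] by blast
  qed
  have Kmem: "\<exists>i<length E. k = key (E!i)" if "k \<in> K" for k
    using that unfolding K_def by (auto simp: in_set_conv_nth)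
  have K1: "\<forall>k\<in>K. snd k \<le> - fst k"
    using hv unfolding K_def by (auto simp: key_def valid_vseg_def)
  have K2: "\<forall>k\<in>K. \<forall>k'\<in>K. kin k k' \<or> kin k' k"
  proof (intro ballI)
    fix k k' assume "k \<in> K" "k' \<in> K"
    then obtain i j where "i < length E" "k = key (E!i)" "j < length E" "k' = key (E!j)" using Kmem by blast
    then show "kin k k' \<or> kin k' k" using ch[of i j] ch[of j i] by (cases "i \<le> j") auto
  qed
  have K3: "\<forall>k\<in>K. \<forall>k'\<in>K. kin k' k \<longrightarrow> \<bar>C k - C k'\<bar> \<le> klen k - klen k'"
  proof (intro ballI impI)
    fix k k' assume "k \<in> K" "k' \<in> K" and kk: "kin k' k"
    then obtain i j where ij: "i < length E" "k = key (E!i)" "j < length E" "k' = key (E!j)" using Kmem by blast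
    show "\<bar>C k - C k'\<bar> \<le> klen k - klen k'"
    proof (cases "i \<le> j")
      case True then show ?thesis using ch[of j i] ij Ceq by simp
    next
      case False
      then have "kin k k'" using ch[of i j] ij by simp
      then have "k = k'" using kk kin_antisym by blast
      then show ?thesis by simp
    qed
  qed
  have nl: "length E - 1 < length E" using len by simp
  have mK: "m \<in> K" unfolding m_def K_def using nl by simp
  have K4: "\<forall>k\<in>K. kin m k"
  proof
    fix k assume "k \<in> K"
    then obtain i where "i < length E" "k = key (E!i)" using Kmem by blast
    then show "kin m k" unfolding m_def using ch[OF nl, of i] by simp
  qed
  have nv: "NV_pair (E!(length E - 2)) (E!Suc (length E - 2))" using hn len unfolding NVt_def by auto
  have "Suc (length E - 2) = length E - 1" using len by simp
  then have "0 \<le> segl (E!(length E - 1))" using nv unfolding NV_pair_def Let_def extended_def by simp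
  moreover have "valid_vseg (E!(length E - 1))" using hv nl by simp
  ultimately have "\<bar>uu (E!(length E - 1))\<bar> \<le> seglen (E!(length E - 1))" using ext_iff by blast
  then have K5: "\<bar>C m\<bar> \<le> klen m" unfolding m_def using Ceq[OF nl] Pp_pm[of "take (length E - 1) E"]
    by (auto simp: wE_def)
  have KP: "Kp K C m" unfolding Kp_def using K1 K2 K3 mK K4 K5 by blast
  have "\<forall>xs e ys. E = xs @ e # ys \<longrightarrow> uu e * Pp xs = rc C (Sx xs e) (C (key e))"
  proof (intro allI impI)
    fix xs e ys assume h: "E = xs @ e # ys"
    define i where "i = length xs"
    have il: "i < length E" "E!i = e" "take i E = xs" using h unfolding i_def by auto
    have "Sx xs e = []" unfolding Sx_def
    proof -
      have "\<forall>k\<in>set (map key xs). \<not> inr k (key e)"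
      proof
        fix k assume "k \<in> set (map key xs)"
        then obtain j where j: "j < length xs" "k = key (xs!j)" by (auto simp: in_set_conv_nth)
        then have "E!j = xs!j" "j < length E" using h by (auto simp: nth_append)
        then have "kin (key e) k" using ch[OF il(1), of j] j il i_def by simp
        then show "\<not> inr k (key e)" using kin_antisym unfolding inr_def by blast
      qed
      then show "sort (filter (\<lambda>k. inr k (key e)) (map key xs)) = []" by (simp add: filter_empty_conv)
    qed
    then show "uu e * Pp xs = rc C (Sx xs e) (C (key e))" using Ceq[OF il(1)] il by (simp add: wE_def)
  qed
  moreover have "\<forall>e\<in>set E. valid_vseg e \<and> key e \<in> K" using hv unfolding K_def by auto
  ultimately have "Inv K C E" unfolding Inv_def by blast
  then show ?thesis using KP by blast
qed

theorem theorem4p15: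
  fixes E :: "vseg list"
  assumes "\<forall>e\<in>set E. valid_vseg e"
    and "admissible E"
    and "\<forall>i. Suc i < length E \<longrightarrow> Supp (E!Suc i) \<subseteq> Supp (E!i)"
  shows "NV E \<longleftrightarrow> NVt E"
proof
  assume "NV E" then show "NVt E" unfolding NV_def eqclass_def by auto
next
  assume hn: "NVt E"
  show "NV E" unfolding NV_def eqclass_def
  proof
    fix E' assume "E' \<in> {E'. R_step\<^sup>*\<^sup>* E E'}"
    then have r: "R_step\<^sup>*\<^sup>* E E'" by simp
    have len: "length E' = length E" using r by (induction rule: rtranclp_induct) (auto dest: R_step_len)
    show "NVt E'"
    proof (cases "2 \<le> length E")
      case False then show ?thesis using len unfolding NVt_def by auto
    next
      case True
      obtain K C m where K: "Kp K C m" and I: "Inv K C E" using init[OF assms(1) assms(3) hn True] by blast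
      have I': "Inv K C E'" using r by (induction rule: rtranclp_induct) (auto intro: pres[OF K] simp: I)
      show ?thesis unfolding NVt_def
      proof (intro allI impI)
        fix i assume "Suc i < length E'"
        then obtain xs a b ys where s: "E' = xs @ a # b # ys" "length xs = i" using split_nth by blast
        then have "E'!i = a" "E'!Suc i = b" by (auto simp: nth_append)
        then show "NV_pair (E'!i) (E'!Suc i)" using adj[OF K I' s(1)] by simp
      qed
    qed
  qed
qed

end
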